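(* Let $(\mathfrak g,N)$ be a finite-dimensional Nijenhuis perm algebra, $(V,\ell,r)$ a finite-dimensional representation of $\mathfrak g$, and $S:\mathfrak g\to\mathfrak g$, $\alpha,\beta:V\to V$ linear maps. The following are equivalent: (1) $(\mathfrak g\ltimes_{\ell,r}V,N+\alpha)$ is a Nijenhuis perm algebra and the linear map $S+\beta$ on $\mathfrak g\oplus V$ is admissible to it; (2) $(\mathfrak g\ltimes_{r^*-\ell^*,r^*}V^*,N+\beta^* )$ is a Nijenhuis perm algebra and the linear map $S+\alpha^*$ on $\mathfrak g\oplus V^*$ is admissible to it; (3) (a) $(V,\ell,r,\alpha)$ is a representation of $(\mathfrak g,N)$; (b) $S$ is admissible to $(\mathfrak g,N)$; (c) $\beta$ is admissible to $(\mathfrak g,N)$ on $(V,\ell,r)$; (d) for all $x\in\mathfrak g$, $u\in V$: $$\beta(\ell(x)\alpha(u))+\ell(S^2(x))u=\ell(S(x))\alpha(u)+\beta(\ell(S(x))u),$$ $$\beta(\alpha(u)r(x))+u\,r(S^2(x))=\alpha(u)r(S(x))+\beta(u\,r(S(x))).$$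
   Context: Over a field $K$. A (right) perm algebra: bilinear product with $(xy)z=x(yz)=x(zy)$. A representation $(V,\ell,r)$: linear $\ell,r:\mathfrak g\to\mathrm{End}(V)$, left action $\ell(x)v$, right action $v\,r(x)$, with $v\,r(xy)=(v\,r(x))r(y)=(v\,r(y))r(x)$ and $\ell(xy)v=\ell(x)(\ell(y)v)=\ell(x)(v\,r(y))=(\ell(x)v)r(y)$. Nijenhuis operator $N$: $N(x)N(y)+N^2(xy)=N(N(x)y)+N(xN(y))$. A representation of $(\mathfrak g,N)$: $(V,\ell,r,\alpha)$ with $\ell(N(x))\alpha(v)+\alpha^2(\ell(x)v)=\alpha(\ell(N(x))v)+\alpha(\ell(x)\alpha(v))$ and $\alpha(v)r(N(x))+\alpha^2(v\,r(x))=\alpha(v\,r(N(x)))+\alpha(\alpha(v)r(x))$. $\mathfrak g\ltimes_{\ell,r}V$ is $\mathfrak g\oplus V$ with product $(x+u)(y+v)=xy+\ell(x)v+u\,r(y)$; $(N+\alpha)(x+u)=N(x)+\alpha(u)$, $(S+\beta)(x+u)=S(x)+\beta(u)$. Dual maps: $\langle\ell^*(x)u^*,v\rangle=\langle u^*,\ell(x)v\rangle$, $\langle u^*r^*(x),v\rangle=\langle u^*,v\,r(x)\rangle$, and $\alpha^*,\beta^*$ are the dual maps of $\alpha,\beta$; $\mathfrak g\ltimes_{r^*-\ell^*,r^*}V^*$ is $\mathfrak g\oplus V^*$ with product $(x+a)(y+b)=xy+(b\,r^*(x)-\ell^*(x)b)+a\,r^*(y)$. A linear map $S$ on a Nijenhuis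 perm algebra $(A,N)$ is admissible to $(A,N)$ if $S(N(x)y)+xS^2(y)-N(x)S(y)-S(xS(y))=0$ and $S(xN(y))+S^2(x)y-S(x)N(y)-S(S(x)y)=0$ for all $x,y\in A$. $\beta$ is admissible to $(\mathfrak g,N)$ on $(V,\ell,r)$ if for all $x\in\mathfrak g,u\in V$: $\beta(\ell(N(x))u)+\ell(x)\beta^2(u)-\ell(N(x))\beta(u)-\beta(\ell(x)\beta(u))=0$ and $\beta(u\,r(N(x)))+\beta^2(u)r(x)-\beta(u)r(N(x))-\beta(\beta(u)r(x))=0$. *)

theory Defs
  imports "HOL-Analysis.Analysis"
begin

(* Finite-dimensional spaces over a field 'k are modelled as coordinate spaces 'k^'n
   with 'n a finite index type; scalar multiplication is ( *s). *)

abbreviation vlin :: "('k::field^'n \<Rightarrow> 'k^'m) \<Rightarrow> bool" where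
  "vlin f \<equiv> Vector_Spaces.linear vector_scalar_mult vector_scalar_mult f"

definition pscale :: "'k::field \<Rightarrow> ('k^'n) \<times> ('k^'m) \<Rightarrow> ('k^'n) \<times> ('k^'m)" where
  "pscale c p = (c *s fst p, c *s snd p)"

definition bilinear_op :: "('k::field \<Rightarrow> 'b \<Rightarrow> 'b) \<Rightarrow> ('b \<Rightarrow> 'b \<Rightarrow> 'b::ab_group_add) \<Rightarrow> bool" where
  "bilinear_op sc m \<longleftrightarrow> (\<forall>x. Vector_Spaces.linear sc sc (m x)) \<and> (\<forall>y. Vector_Spaces.linear sc sc (\<lambda>x. m x y))"

definition perm_algebra :: "('k::field \<Rightarrow> 'b \<Rightarrow> 'b) \<Rightarrow> ('b \<Rightarrow> 'b \<Rightarrow> 'b::ab_group_add) \<Rightarrow> bool" where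
  "perm_algebra sc m \<longleftrightarrow> bilinear_op sc m \<and>
     (\<forall>x y z. m (m x y) z = m x (m y z) \<and> m x (m y z) = m x (m z y))"

definition nijenhuis_op :: "('k::field \<Rightarrow> 'b \<Rightarrow> 'b) \<Rightarrow> ('b \<Rightarrow> 'b \<Rightarrow> 'b::ab_group_add) \<Rightarrow> ('b \<Rightarrow> 'b) \<Rightarrow> bool" where
  "nijenhuis_op sc m N \<longleftrightarrow> Vector_Spaces.linear sc sc N \<and>
     (\<forall>x y. m (N x) (N y) + N (N (m x y)) = N (m (N x) y) + N (m x (N y)))"

definition nijenhuis_perm_algebra :: "('k::field \<Rightarrow> 'b \<Rightarrow> 'b) \<Rightarrow> ('b \<Rightarrow> 'b \<Rightarrow> 'b::ab_group_add) \<Rightarrow> ('b \<Rightarrow> 'b) \<Rightarrow> bool" where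
  "nijenhuis_perm_algebra sc m N \<longleftrightarrow> perm_algebra sc m \<and> nijenhuis_op sc m N"

definition admissible :: "('k::field \<Rightarrow> 'b \<Rightarrow> 'b) \<Rightarrow> ('b \<Rightarrow> 'b \<Rightarrow> 'b::ab_group_add) \<Rightarrow> ('b \<Rightarrow> 'b) \<Rightarrow> ('b \<Rightarrow> 'b) \<Rightarrow> bool" where
  "admissible sc m N S \<longleftrightarrow> Vector_Spaces.linear sc sc S \<and>
     (\<forall>x y. S (m (N x) y) + m x (S (S y)) - m (N x) (S y) - S (m x (S y)) = 0) \<and>
     (\<forall>x y. S (m x (N y)) + m (S (S x)) y - m (S x) (N y) - S (m (S x) y) = 0)"

(* representation (V,l,r) of the perm algebra (g, m); r x v stands for  v r(x) *)
definition perm_rep :: "('k::field^'n \<Rightarrow> 'k^'n \<Rightarrow> 'k^'n) \<Rightarrow> ('k^'n \<Rightarrow> 'k^'m \<Rightarrow> 'k^'m) \<Rightarrow> ('k^'n \<Rightarrow> 'k^'m \<Rightarrow> 'k^'m) \<Rightarrow> bool" where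
  "perm_rep m l r \<longleftrightarrow> (\<forall>v. vlin (\<lambda>x. l x v)) \<and> (\<forall>v. vlin (\<lambda>x. r x v)) \<and> (\<forall>x. vlin (l x)) \<and> (\<forall>x. vlin (r x)) \<and>
     (\<forall>x y v. r (m x y) v = r y (r x v) \<and> r y (r x v) = r x (r y v)) \<and>
     (\<forall>x y v. l (m x y) v = l x (l y v) \<and> l x (l y v) = l x (r y v) \<and> l x (r y v) = r y (l x v))"

definition nijenhuis_rep :: "('k::field^'n \<Rightarrow> 'k^'n \<Rightarrow> 'k^'n) \<Rightarrow> ('k^'n \<Rightarrow> 'k^'n) \<Rightarrow> ('k^'n \<Rightarrow> 'k^'m \<Rightarrow> 'k^'m) \<Rightarrow> ('k^'n \<Rightarrow> 'k^'m \<Rightarrow> 'k^'m) \<Rightarrow> ('k^'m \<Rightarrow> 'k^'m) \<Rightarrow> bool" where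
  "nijenhuis_rep m N l r \<alpha> \<longleftrightarrow> perm_rep m l r \<and> vlin \<alpha> \<and>
     (\<forall>x v. l (N x) (\<alpha> v) + \<alpha> (\<alpha> (l x v)) = \<alpha> (l (N x) v) + \<alpha> (l x (\<alpha> v))) \<and>
     (\<forall>x v. r (N x) (\<alpha> v) + \<alpha> (\<alpha> (r x v)) = \<alpha> (r (N x) v) + \<alpha> (r x (\<alpha> v)))"

definition admissible_rep :: "('k::field^'n \<Rightarrow> 'k^'n) \<Rightarrow> ('k^'n \<Rightarrow> 'k^'m \<Rightarrow> 'k^'m) \<Rightarrow> ('k^'n \<Rightarrow> 'k^'m \<Rightarrow> 'k^'m) \<Rightarrow> ('k^'m \<Rightarrow> 'k^'m) \<Rightarrow> bool" where
  "admissible_rep N l r \<beta> \<longleftrightarrow> vlin \<beta> \<and>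
     (\<forall>x u. \<beta> (l (N x) u) + l x (\<beta> (\<beta> u)) - l (N x) (\<beta> u) - \<beta> (l x (\<beta> u)) = 0) \<and>
     (\<forall>x u. \<beta> (r (N x) u) + r x (\<beta> (\<beta> u)) - r (N x) (\<beta> u) - \<beta> (r x (\<beta> u)) = 0)"

definition semidirect :: "('a \<Rightarrow> 'a \<Rightarrow> 'a) \<Rightarrow> ('a \<Rightarrow> 'v \<Rightarrow> 'v::plus) \<Rightarrow> ('a \<Rightarrow> 'v \<Rightarrow> 'v) \<Rightarrow> 'a \<times> 'v \<Rightarrow> 'a \<times> 'v \<Rightarrow> 'a \<times> 'v" where
  "semidirect m l r p q = (m (fst p) (fst q), l (fst p) (snd q) + r (fst q) (snd p))"

(* canonical pairing between V^* and V; V^* = 'k^'m via the standard (nondegenerate) pairing *)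
definition pairing :: "'k::field^'m \<Rightarrow> 'k^'m \<Rightarrow> 'k" where
  "pairing a v = (\<Sum>i\<in>UNIV. a $ i * v $ i)"

definition dual_map :: "('k::field^'m \<Rightarrow> 'k^'m) \<Rightarrow> 'k^'m \<Rightarrow> 'k^'m" where
  "dual_map f = (THE g. \<forall>a v. pairing (g a) v = pairing a (f v))"

definition dual_semidirect :: "('k::field^'n \<Rightarrow> 'k^'n \<Rightarrow> 'k^'n) \<Rightarrow> ('k^'n \<Rightarrow> 'k^'m \<Rightarrow> 'k^'m) \<Rightarrow> ('k^'n \<Rightarrow> 'k^'m \<Rightarrow> 'k^'m) \<Rightarrow> ('k^'n) \<times> ('k^'m) \<Rightarrow> ('k^'n) \<times> ('k^'m) \<Rightarrow> ('k^'n) \<times> ('k^'m)" where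
  "dual_semidirect m l r p q = (m (fst p) (fst q),
      (dual_map (r (fst p)) (snd q) - dual_map (l (fst p)) (snd q)) + dual_map (r (fst q)) (snd p))"

end

theory Submission
  imports Defs
begin


lemma pairing_add_left[simp]: "pairing (a + b) v = pairing a v + pairing b v"
  by (simp add: pairing_def distrib_right sum.distrib)
lemma pairing_diff_left[simp]: "pairing (a - b) v = pairing a v - pairing b v"
  by (simp add: pairing_def left_diff_distrib sum_subtractf)
lemma pairing_zero_left[simp]: "pairing 0 v = 0"
  by (simp add: pairing_def)
lemma pairing_scale_left[simp]: "pairing (c *s a) v = c * pairing a v"
  by (simp add: pairing_def sum_distrib_left mult.assoc)
lemma pairing_add_right: "pairing a (u + v) = pairing a u + pairing a v"
  by (simp add: pairing_def distrib_left sum.distrib)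
lemma pairing_diff_right: "pairing a (u - v) = pairing a u - pairing a v"
  by (simp add: pairing_def right_diff_distrib sum_subtractf)

lemma pairing_axis: "pairing a (axis i 1) = a $ i"
proof -
  have "pairing a (axis i 1) = (\<Sum>j\<in>UNIV. if j = i then a $ i else 0)"
    unfolding pairing_def by (rule sum.cong) (auto simp: axis_def)
  thus ?thesis by simp
qed

lemma pairing_nondeg: "(\<And>v. pairing a v = pairing b v) \<Longrightarrow> a = b"
  by (metis pairing_axis vec_eq_iff)

lemma pairing_nondeg_right: "(\<And>a. pairing a u = pairing a w) \<Longrightarrow> u = w"
proof -
  assume h: "\<And>a. pairing a u = pairing a w"
  have "pairing a u = pairing a w" for a by (rule h)
  then have "pairing u a = pairing w a" for a by (simp add: pairing_def mult.commute)
  thus ?thesis by (rule pairing_nondeg)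
qed

definition dt :: "('k::field^'m \<Rightarrow> 'k^'m) \<Rightarrow> 'k^'m \<Rightarrow> 'k^'m" where
  "dt f a = (\<chi> i. pairing a (f (axis i 1)))"

lemma dt_pairing:
  assumes "vlin f" shows "pairing (dt f a) v = pairing a (f v)"
proof -
  have "pairing a (f v) = (\<Sum>j\<in>UNIV. a $ j * (\<Sum>i\<in>UNIV. v $ i * f (axis i 1) $ j))"
    unfolding pairing_def by (intro sum.cong refl arg_cong2[where f="(*)"] Cartesian_Space.linear_componentwise[OF assms])
  also have "\<dots> = (\<Sum>j\<in>UNIV. \<Sum>i\<in>UNIV. a $ j * (v $ i * f (axis i 1) $ j))"
    by (simp only: sum_distrib_left)
  also have "\<dots> = (\<Sum>i\<in>UNIV. \<Sum>j\<in>UNIV. a $ j * (v $ i * f (axis i 1) $ j))"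
    by (rule sum.swap)
  also have "\<dots> = (\<Sum>i\<in>UNIV. (\<Sum>j\<in>UNIV. a $ j * f (axis i 1) $ j) * v $ i)"
    unfolding sum_distrib_right by (intro sum.cong refl) (simp only: mult_ac)
  finally show ?thesis by (simp add: dt_def pairing_def)
qed

lemma dual_map_eq:
  assumes "vlin f" shows "dual_map f = dt f"
  unfolding dual_map_def
proof (rule the_equality)
  show "\<forall>a v. pairing (dt f a) v = pairing a (f v)" using dt_pairing[OF assms] by blast
next
  fix g assume "\<forall>a v. pairing (g a) v = pairing a (f v)"
  then show "g = dt f" using dt_pairing[OF assms] by (intro ext pairing_nondeg) auto
qed

lemma dual_pairing[simp]:
  assumes "vlin f" shows "pairing (dual_map f a) v = pairing a (f v)"
  using dual_map_eq[OF assms] dt_pairing[OF assms] by simp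

lemma pairing_zero_right[simp]: "pairing a 0 = 0"
  by (simp add: pairing_def)
lemma pairing_scale_right: "pairing a (c *s v) = c * pairing a v"
  by (simp add: pairing_def sum_distrib_left mult_ac)
lemma pairing_neg_right: "pairing a (- v) = - pairing a v"
  by (simp add: pairing_def sum_negf)

lemma lin_simps:
  assumes "Vector_Spaces.linear s1 s2 f"
  shows "f (x + y) = f x + f y" "f (x - y) = f x - f y" "f 0 = 0" "f (s1 c x) = s2 c (f x)" "f (- x) = - f x"
  using assms unfolding linear_iff_module_hom
  by (auto simp: module_hom.add module_hom.diff module_hom.zero module_hom.scale module_hom.neg)

lemma lin2_simps:
  assumes "\<forall>v. Vector_Spaces.linear s1 s2 (\<lambda>x. g x v)"
  shows "g (x + y) v = g x v + g y v" "g (x - y) v = g x v - g y v" "g 0 v = 0" "g (s1 c x) v = s2 c (g x v)" "g (- x) v = - g x v"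
  using lin_simps[OF assms[rule_format, of v]] by auto

lemma vs_pscale: "vector_space (pscale :: 'k::field \<Rightarrow> ('k^'n) \<times> ('k^'m) \<Rightarrow> _)"
  by unfold_locales (auto simp: pscale_def algebra_simps vec.scale_right_distrib vec.scale_left_distrib)

lemma lin_pscale:
  assumes "\<And>p q. f (p + q) = f p + f q" "\<And>c p. f (pscale c p) = pscale c (f p)"
  shows "Vector_Spaces.linear pscale pscale (f :: ('k::field^'n) \<times> ('k^'m) \<Rightarrow> _)"
  unfolding Vector_Spaces.linear_iff by (auto simp: assms vs_pscale)

locale NP =
  fixes m :: "'k::field^'n::finite \<Rightarrow> 'k^'n \<Rightarrow> 'k^'n"
    and N S :: "'k^'n \<Rightarrow> 'k^'n"
    and l r :: "'k^'n \<Rightarrow> 'k^'m::finite \<Rightarrow> 'k^'m"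
    and \<alpha> \<beta> :: "'k^'m \<Rightarrow> 'k^'m"
  assumes npa: "nijenhuis_perm_algebra vector_scalar_mult m N"
    and rep: "perm_rep m l r"
    and linS: "vlin S" and lin\<alpha>: "vlin \<alpha>" and lin\<beta>: "vlin \<beta>"
begin

lemma linN: "vlin N" using npa unfolding nijenhuis_perm_algebra_def nijenhuis_op_def perm_algebra_def bilinear_op_def by (elim conjE) assumption
lemma nijN0: "\<forall>x y. m (N x) (N y) + N (N (m x y)) = N (m (N x) y) + N (m x (N y))" using npa unfolding nijenhuis_perm_algebra_def nijenhuis_op_def perm_algebra_def bilinear_op_def by (elim conjE) assumption
lemma lin_m1: "\<forall>x. vlin (m x)" using npa unfolding nijenhuis_perm_algebra_def nijenhuis_op_def perm_algebra_def bilinear_op_def by (elim conjE) assumption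
lemma lin_m2: "\<forall>y. vlin (\<lambda>x. m x y)" using npa unfolding nijenhuis_perm_algebra_def nijenhuis_op_def perm_algebra_def bilinear_op_def by (elim conjE) assumption
lemma m_ids: "\<forall>x y z. m (m x y) z = m x (m y z) \<and> m x (m y z) = m x (m z y)" using npa unfolding nijenhuis_perm_algebra_def nijenhuis_op_def perm_algebra_def bilinear_op_def by (elim conjE) assumption
lemmas nijN = nijN0[rule_format]
lemmas m_simps = m_ids[rule_format, THEN conjunct1] m_ids[rule_format, THEN conjunct2]
lemma lin_l1: "\<forall>x. vlin (l x)" using rep unfolding perm_rep_def by (elim conjE) assumption
lemma lin_l2: "\<forall>v. vlin (\<lambda>x. l x v)" using rep unfolding perm_rep_def by (elim conjE) assumption
lemma lin_r1: "\<forall>x. vlin (r x)" using rep unfolding perm_rep_def by (elim conjE) assumption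
lemma lin_r2: "\<forall>v. vlin (\<lambda>x. r x v)" using rep unfolding perm_rep_def by (elim conjE) assumption
lemmas lin_lx[simp] = lin_l1[rule_format] and lin_rx[simp] = lin_r1[rule_format]
lemma rep_simps: "l (m x y) v = l x (l y v)" "l x (r y v) = l x (l y v)" "r y (l x v) = l x (l y v)"
  "r (m x y) v = r y (r x v)" "r y (r x v) = r x (r y v)"
proof -
  have H1: "\<forall>x y v. r (m x y) v = r y (r x v) \<and> r y (r x v) = r x (r y v)"
    and H2: "\<forall>x y v. l (m x y) v = l x (l y v) \<and> l x (l y v) = l x (r y v) \<and> l x (r y v) = r y (l x v)"
    using rep unfolding perm_rep_def apply - apply (elim conjE) apply assumption apply (elim conjE) apply assumption done
  note R1 = H2[rule_format, THEN conjunct1] and R2 = H2[rule_format, THEN conjunct2, THEN conjunct1]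
    and R3 = H2[rule_format, THEN conjunct2, THEN conjunct2]
    and R4 = H1[rule_format, THEN conjunct1] and R5 = H1[rule_format, THEN conjunct2]
  show "l (m x y) v = l x (l y v)" "l x (r y v) = l x (l y v)" "r y (l x v) = l x (l y v)"
    "r (m x y) v = r y (r x v)" "r y (r x v) = r x (r y v)"
    by (rule R1, simp only: R2 R3, simp only: R2 R3, rule R4, rule R5)
qed

lemmas L = lin_simps[OF linN] lin_simps[OF linS] lin_simps[OF lin\<alpha>] lin_simps[OF lin\<beta>]
  lin_simps[OF lin_m1[rule_format]] lin2_simps[OF lin_m2]
  lin_simps[OF lin_l1[rule_format]] lin2_simps[OF lin_l2]
  lin_simps[OF lin_r1[rule_format]] lin2_simps[OF lin_r2]

abbreviation "sd \<equiv> semidirect m l r"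
abbreviation "NA \<equiv> map_prod N \<alpha>"
abbreviation "SB \<equiv> map_prod S \<beta>"


lemma lc1: "(X::'a::ab_group_add) - Y = L1 - R1 \<Longrightarrow> L1 = R1 \<Longrightarrow> X = Y" by simp
lemma lc2: "(X::'a::ab_group_add) - Y = (L1 - R1) + (L2 - R2) \<Longrightarrow> L1 = R1 \<Longrightarrow> L2 = R2 \<Longrightarrow> X = Y" by simp
lemma lc3: "(X::'a::ab_group_add) - Y = (L1 - R1) + (L2 - R2) + (L3 - R3) \<Longrightarrow> L1 = R1 \<Longrightarrow> L2 = R2 \<Longrightarrow> L3 = R3 \<Longrightarrow> X = Y" by simp
lemma lc4: "(X::'a::ab_group_add) - Y = (L1 - R1) + (L2 - R2) + (L3 - R3) + (L4 - R4) \<Longrightarrow> L1 = R1 \<Longrightarrow> L2 = R2 \<Longrightarrow> L3 = R3 \<Longrightarrow> L4 = R4 \<Longrightarrow> X = Y" by simp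
lemmas PE = pairing_add_right pairing_diff_right pairing_neg_right pairing_scale_right

lemma sd_perm: "perm_algebra pscale sd"
  unfolding perm_algebra_def bilinear_op_def
proof (intro conjI allI)
  fix p show "Vector_Spaces.linear pscale pscale (sd p)"
    by (rule lin_pscale) (auto simp: semidirect_def pscale_def L algebra_simps)
next
  fix q show "Vector_Spaces.linear pscale pscale (\<lambda>p. sd p q)"
    by (rule lin_pscale) (auto simp: semidirect_def pscale_def L algebra_simps)
next
  fix x y z show "sd (sd x y) z = sd x (sd y z)"
    by (auto simp: semidirect_def L rep_simps m_simps algebra_simps)
next
  fix x y z show "sd x (sd y z) = sd x (sd z y)"
    by (auto simp: semidirect_def L rep_simps m_simps algebra_simps)
qed

definition "cond3 \<longleftrightarrow> nijenhuis_rep m N l r \<alpha> \<and> admissible vector_scalar_mult m N S \<and> admissible_rep N l r \<beta> \<and>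
          (\<forall>x u. \<beta> (l x (\<alpha> u)) + l (S (S x)) u = l (S x) (\<alpha> u) + \<beta> (l (S x) u)) \<and>
          (\<forall>x u. \<beta> (r x (\<alpha> u)) + r (S (S x)) u = r (S x) (\<alpha> u) + \<beta> (r (S x) u))"

lemma cond3_iff: "cond3 \<longleftrightarrow>
   (\<forall>x v. l (N x) (\<alpha> v) + \<alpha> (\<alpha> (l x v)) = \<alpha> (l (N x) v) + \<alpha> (l x (\<alpha> v))) \<and>
   (\<forall>x v. r (N x) (\<alpha> v) + \<alpha> (\<alpha> (r x v)) = \<alpha> (r (N x) v) + \<alpha> (r x (\<alpha> v))) \<and>
   (\<forall>x y. S (m (N x) y) + m x (S (S y)) - m (N x) (S y) - S (m x (S y)) = 0) \<and>
   (\<forall>x y. S (m x (N y)) + m (S (S x)) y - m (S x) (N y) - S (m (S x) y) = 0) \<and>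
   (\<forall>x u. \<beta> (l (N x) u) + l x (\<beta> (\<beta> u)) - l (N x) (\<beta> u) - \<beta> (l x (\<beta> u)) = 0) \<and>
   (\<forall>x u. \<beta> (r (N x) u) + r x (\<beta> (\<beta> u)) - r (N x) (\<beta> u) - \<beta> (r x (\<beta> u)) = 0) \<and>
   (\<forall>x u. \<beta> (l x (\<alpha> u)) + l (S (S x)) u = l (S x) (\<alpha> u) + \<beta> (l (S x) u)) \<and>
   (\<forall>x u. \<beta> (r x (\<alpha> u)) + r (S (S x)) u = r (S x) (\<alpha> u) + \<beta> (r (S x) u))"
  unfolding cond3_def nijenhuis_rep_def admissible_def admissible_rep_def
  using rep linS lin\<alpha> lin\<beta> by blast

lemma sd_iff: "(nijenhuis_perm_algebra pscale sd NA \<and> admissible pscale sd NA SB) \<longleftrightarrow> cond3"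
proof
  assume H: "nijenhuis_perm_algebra pscale sd NA \<and> admissible pscale sd NA SB"
  then have nij: "\<And>p q. sd (NA p) (NA q) + NA (NA (sd p q)) = NA (sd (NA p) q) + NA (sd p (NA q))"
    and a1: "\<And>p q. SB (sd (NA p) q) + sd p (SB (SB q)) - sd (NA p) (SB q) - SB (sd p (SB q)) = 0"
    and a2: "\<And>p q. SB (sd p (NA q)) + sd (SB (SB p)) q - sd (SB p) (NA q) - SB (sd (SB p) q) = 0"
    by (auto simp: nijenhuis_perm_algebra_def nijenhuis_op_def admissible_def)
  show cond3 unfolding cond3_iff
  proof (intro conjI allI)
    fix x v show "l (N x) (\<alpha> v) + \<alpha> (\<alpha> (l x v)) = \<alpha> (l (N x) v) + \<alpha> (l x (\<alpha> v))"
      using nij[of "(x,0)" "(0,v)"] by (simp add: semidirect_def L)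
  next
    fix x v show "r (N x) (\<alpha> v) + \<alpha> (\<alpha> (r x v)) = \<alpha> (r (N x) v) + \<alpha> (r x (\<alpha> v))"
      using nij[of "(0,v)" "(x,0)"] by (simp add: semidirect_def L)
  next
    fix x y show "S (m (N x) y) + m x (S (S y)) - m (N x) (S y) - S (m x (S y)) = 0"
      using a1[of "(x,0)" "(y,0)"] by (simp add: semidirect_def L prod_eq_iff)
  next
    fix x y show "S (m x (N y)) + m (S (S x)) y - m (S x) (N y) - S (m (S x) y) = 0"
      using a2[of "(x,0)" "(y,0)"] by (simp add: semidirect_def L prod_eq_iff)
  next
    fix x u show "\<beta> (l (N x) u) + l x (\<beta> (\<beta> u)) - l (N x) (\<beta> u) - \<beta> (l x (\<beta> u)) = 0"
      using a1[of "(x,0)" "(0,u)"] by (simp add: semidirect_def L prod_eq_iff)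
  next
    fix x u show "\<beta> (r (N x) u) + r x (\<beta> (\<beta> u)) - r (N x) (\<beta> u) - \<beta> (r x (\<beta> u)) = 0"
      using a2[of "(0,u)" "(x,0)"] by (simp add: semidirect_def L prod_eq_iff)
  next
    fix x u show "\<beta> (l x (\<alpha> u)) + l (S (S x)) u = l (S x) (\<alpha> u) + \<beta> (l (S x) u)"
      using a2[of "(x,0)" "(0,u)"] by (simp add: semidirect_def L prod_eq_iff algebra_simps)
  next
    fix x u show "\<beta> (r x (\<alpha> u)) + r (S (S x)) u = r (S x) (\<alpha> u) + \<beta> (r (S x) u)"
      using a1[of "(0,u)" "(x,0)"] by (simp add: semidirect_def L prod_eq_iff algebra_simps)
  qed
next
  assume "cond3"
  then have c1: "\<And>x v. l (N x) (\<alpha> v) + \<alpha> (\<alpha> (l x v)) = \<alpha> (l (N x) v) + \<alpha> (l x (\<alpha> v))"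
   and c2: "\<And>x v. r (N x) (\<alpha> v) + \<alpha> (\<alpha> (r x v)) = \<alpha> (r (N x) v) + \<alpha> (r x (\<alpha> v))"
   and c3: "\<And>x y. S (m (N x) y) + m x (S (S y)) - m (N x) (S y) - S (m x (S y)) = 0"
   and c4: "\<And>x y. S (m x (N y)) + m (S (S x)) y - m (S x) (N y) - S (m (S x) y) = 0"
   and c5: "\<And>x u. \<beta> (l (N x) u) + l x (\<beta> (\<beta> u)) - l (N x) (\<beta> u) - \<beta> (l x (\<beta> u)) = 0"
   and c6: "\<And>x u. \<beta> (r (N x) u) + r x (\<beta> (\<beta> u)) - r (N x) (\<beta> u) - \<beta> (r x (\<beta> u)) = 0"
   and c7: "\<And>x u. \<beta> (l x (\<alpha> u)) + l (S (S x)) u = l (S x) (\<alpha> u) + \<beta> (l (S x) u)"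
   and c8: "\<And>x u. \<beta> (r x (\<alpha> u)) + r (S (S x)) u = r (S x) (\<alpha> u) + \<beta> (r (S x) u)"
    unfolding cond3_iff by blast+
  have linNA: "Vector_Spaces.linear pscale pscale NA"
    by (rule lin_pscale) (auto simp: pscale_def L)
  have linSB: "Vector_Spaces.linear pscale pscale SB"
    by (rule lin_pscale) (auto simp: pscale_def L)
  have nij: "sd (NA p) (NA q) + NA (NA (sd p q)) = NA (sd (NA p) q) + NA (sd p (NA q))" for p q
  proof -
    obtain x u y v where pq: "p = (x,u)" "q = (y,v)" by (cases p, cases q) auto
    show ?thesis unfolding pq
      apply (simp add: semidirect_def L nijN)
      by (rule lc2[OF _ c1[of x v] c2[of y u]]) (simp add: algebra_simps)
  qed
  have ad1: "SB (sd (NA p) q) + sd p (SB (SB q)) - sd (NA p) (SB q) - SB (sd p (SB q)) = 0" for p q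
  proof -
    obtain x u y v where pq: "p = (x,u)" "q = (y,v)" by (cases p, cases q) auto
    show ?thesis unfolding pq prod_eq_iff
    proof
      show "fst (SB (sd (NA (x, u)) (y, v)) + sd (x, u) (SB (SB (y, v))) - sd (NA (x, u)) (SB (y, v)) - SB (sd (x, u) (SB (y, v)))) = fst 0"
        using c3[of x y] by (simp add: semidirect_def L)
      show "snd (SB (sd (NA (x, u)) (y, v)) + sd (x, u) (SB (SB (y, v))) - sd (NA (x, u)) (SB (y, v)) - SB (sd (x, u) (SB (y, v)))) = snd 0"
        apply (simp add: semidirect_def L)
        by (rule lc2[OF _ c5[of x v] c8[of y u]]) (simp add: algebra_simps)
    qed
  qed
  have ad2: "SB (sd p (NA q)) + sd (SB (SB p)) q - sd (SB p) (NA q) - SB (sd (SB p) q) = 0" for p q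
  proof -
    obtain x u y v where pq: "p = (x,u)" "q = (y,v)" by (cases p, cases q) auto
    show ?thesis unfolding pq prod_eq_iff
    proof
      show "fst (SB (sd (x, u) (NA (y, v))) + sd (SB (SB (x, u))) (y, v) - sd (SB (x, u)) (NA (y, v)) - SB (sd (SB (x, u)) (y, v))) = fst 0"
        using c4[of x y] by (simp add: semidirect_def L)
      show "snd (SB (sd (x, u) (NA (y, v))) + sd (SB (SB (x, u))) (y, v) - sd (SB (x, u)) (NA (y, v)) - SB (sd (SB (x, u)) (y, v))) = snd 0"
        apply (simp add: semidirect_def L)
        by (rule lc2[OF _ c7[of x v] c6[of y u]]) (simp add: algebra_simps)
    qed
  qed
  show "nijenhuis_perm_algebra pscale sd NA \<and> admissible pscale sd NA SB"
    unfolding nijenhuis_perm_algebra_def nijenhuis_op_def admissible_def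
    using sd_perm linNA linSB nij ad1 ad2 by blast
qed



abbreviation "ds \<equiv> dual_semidirect m l r"
abbreviation "NB \<equiv> map_prod N (dual_map \<beta>)"
abbreviation "SA \<equiv> map_prod S (dual_map \<alpha>)"

lemmas DS = dual_semidirect_def dual_pairing PE L rep_simps m_simps lin\<alpha> lin\<beta>

lemma ds_perm: "perm_algebra pscale ds"
  unfolding perm_algebra_def bilinear_op_def
proof (intro conjI allI)
  fix p show "Vector_Spaces.linear pscale pscale (ds p)"
    by (rule lin_pscale) (auto simp: prod_eq_iff pscale_def dual_semidirect_def L intro!: pairing_nondeg, simp_all add: DS algebra_simps)
next
  fix q show "Vector_Spaces.linear pscale pscale (\<lambda>p. ds p q)"
    by (rule lin_pscale) (auto simp: prod_eq_iff pscale_def dual_semidirect_def L intro!: pairing_nondeg, simp_all add: DS algebra_simps)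
next
  fix x y z show "ds (ds x y) z = ds x (ds y z)"
    by (auto simp: prod_eq_iff dual_semidirect_def m_simps intro!: pairing_nondeg, simp add: DS algebra_simps)
next
  fix x y z show "ds x (ds y z) = ds x (ds z y)"
    by (auto simp: prod_eq_iff dual_semidirect_def m_simps intro!: pairing_nondeg, simp add: DS algebra_simps)
qed


lemma ds_iff: "(nijenhuis_perm_algebra pscale ds NB \<and> admissible pscale ds NB SA) \<longleftrightarrow> cond3"
proof
  assume H: "nijenhuis_perm_algebra pscale ds NB \<and> admissible pscale ds NB SA"
  then have nij: "\<And>p q. ds (NB p) (NB q) + NB (NB (ds p q)) = NB (ds (NB p) q) + NB (ds p (NB q))"
    and a1: "\<And>p q. SA (ds (NB p) q) + ds p (SA (SA q)) - ds (NB p) (SA q) - SA (ds p (SA q)) = 0"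
    and a2: "\<And>p q. SA (ds p (NB q)) + ds (SA (SA p)) q - ds (SA p) (NB q) - SA (ds (SA p) q) = 0"
    by (auto simp: nijenhuis_perm_algebra_def nijenhuis_op_def admissible_def)
  let ?P = "\<lambda>v z. pairing (snd z) v"
  show cond3 unfolding cond3_iff
  proof (intro conjI allI)
    fix x v show "l (N x) (\<alpha> v) + \<alpha> (\<alpha> (l x v)) = \<alpha> (l (N x) v) + \<alpha> (l x (\<alpha> v))"
    proof (rule pairing_nondeg_right)
      fix b :: "'k^'m"
      show "pairing b (l (N x) (\<alpha> v) + \<alpha> (\<alpha> (l x v))) = pairing b (\<alpha> (l (N x) v) + \<alpha> (l x (\<alpha> v)))"
        by (rule lc2[OF _ arg_cong[OF a2[of "(0,b)" "(x,0)"], of "?P v"] arg_cong[OF a1[of "(x,0)" "(0,b)"], of "?P v", symmetric]])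
          (simp add: DS algebra_simps)
    qed
  next
    fix x v show "r (N x) (\<alpha> v) + \<alpha> (\<alpha> (r x v)) = \<alpha> (r (N x) v) + \<alpha> (r x (\<alpha> v))"
    proof (rule pairing_nondeg_right)
      fix a :: "'k^'m"
      show "pairing a (r (N x) (\<alpha> v) + \<alpha> (\<alpha> (r x v))) = pairing a (\<alpha> (r (N x) v) + \<alpha> (r x (\<alpha> v)))"
        by (rule lc1[OF _ arg_cong[OF a2[of "(0,a)" "(x,0)"], of "?P v"]])
          (simp add: DS algebra_simps)
    qed
  next
    fix x y show "S (m (N x) y) + m x (S (S y)) - m (N x) (S y) - S (m x (S y)) = 0"
      using arg_cong[OF a1[of "(x,0)" "(y,0)"], of fst] by (simp add: dual_semidirect_def L)
  next
    fix x y show "S (m x (N y)) + m (S (S x)) y - m (S x) (N y) - S (m (S x) y) = 0"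
      using arg_cong[OF a2[of "(x,0)" "(y,0)"], of fst] by (simp add: dual_semidirect_def L)
  next
    fix x v show "\<beta> (l (N x) v) + l x (\<beta> (\<beta> v)) - l (N x) (\<beta> v) - \<beta> (l x (\<beta> v)) = 0"
    proof (rule pairing_nondeg_right)
      fix b :: "'k^'m"
      show "pairing b (\<beta> (l (N x) v) + l x (\<beta> (\<beta> v)) - l (N x) (\<beta> v) - \<beta> (l x (\<beta> v))) = pairing b 0"
        by (rule lc2[OF _ arg_cong[OF nij[of "(0,b)" "(x,0)"], of "?P v"] arg_cong[OF nij[of "(x,0)" "(0,b)"], of "?P v", symmetric]])
          (simp add: DS algebra_simps)
    qed
  next
    fix x v show "\<beta> (r (N x) v) + r x (\<beta> (\<beta> v)) - r (N x) (\<beta> v) - \<beta> (r x (\<beta> v)) = 0"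
    proof (rule pairing_nondeg_right)
      fix a :: "'k^'m"
      show "pairing a (\<beta> (r (N x) v) + r x (\<beta> (\<beta> v)) - r (N x) (\<beta> v) - \<beta> (r x (\<beta> v))) = pairing a 0"
        by (rule lc1[OF _ arg_cong[OF nij[of "(0,a)" "(x,0)"], of "?P v"]])
          (simp add: DS algebra_simps)
    qed
  next
    fix x v show "\<beta> (l x (\<alpha> v)) + l (S (S x)) v = l (S x) (\<alpha> v) + \<beta> (l (S x) v)"
    proof (rule pairing_nondeg_right)
      fix b :: "'k^'m"
      show "pairing b (\<beta> (l x (\<alpha> v)) + l (S (S x)) v) = pairing b (l (S x) (\<alpha> v) + \<beta> (l (S x) v))"
        by (rule lc2[OF _ arg_cong[OF a1[of "(0,b)" "(x,0)"], of "?P v"] arg_cong[OF a2[of "(x,0)" "(0,b)"], of "?P v", symmetric]])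
          (simp add: DS algebra_simps)
    qed
  next
    fix x v show "\<beta> (r x (\<alpha> v)) + r (S (S x)) v = r (S x) (\<alpha> v) + \<beta> (r (S x) v)"
    proof (rule pairing_nondeg_right)
      fix a :: "'k^'m"
      show "pairing a (\<beta> (r x (\<alpha> v)) + r (S (S x)) v) = pairing a (r (S x) (\<alpha> v) + \<beta> (r (S x) v))"
        by (rule lc1[OF _ arg_cong[OF a1[of "(0,a)" "(x,0)"], of "?P v"]])
          (simp add: DS algebra_simps)
    qed
  qed
next
  assume "cond3"
  then have c1: "\<And>x v. l (N x) (\<alpha> v) + \<alpha> (\<alpha> (l x v)) = \<alpha> (l (N x) v) + \<alpha> (l x (\<alpha> v))"
   and c2: "\<And>x v. r (N x) (\<alpha> v) + \<alpha> (\<alpha> (r x v)) = \<alpha> (r (N x) v) + \<alpha> (r x (\<alpha> v))"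
   and c3: "\<And>x y. S (m (N x) y) + m x (S (S y)) - m (N x) (S y) - S (m x (S y)) = 0"
   and c4: "\<And>x y. S (m x (N y)) + m (S (S x)) y - m (S x) (N y) - S (m (S x) y) = 0"
   and c5: "\<And>x u. \<beta> (l (N x) u) + l x (\<beta> (\<beta> u)) - l (N x) (\<beta> u) - \<beta> (l x (\<beta> u)) = 0"
   and c6: "\<And>x u. \<beta> (r (N x) u) + r x (\<beta> (\<beta> u)) - r (N x) (\<beta> u) - \<beta> (r x (\<beta> u)) = 0"
   and c7: "\<And>x u. \<beta> (l x (\<alpha> u)) + l (S (S x)) u = l (S x) (\<alpha> u) + \<beta> (l (S x) u)"
   and c8: "\<And>x u. \<beta> (r x (\<alpha> u)) + r (S (S x)) u = r (S x) (\<alpha> u) + \<beta> (r (S x) u)"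
    unfolding cond3_iff by blast+
  have linNB: "Vector_Spaces.linear pscale pscale NB"
    by (rule lin_pscale) (auto simp: pscale_def L intro!: pairing_nondeg, simp_all add: DS algebra_simps)
  have linSA: "Vector_Spaces.linear pscale pscale SA"
    by (rule lin_pscale) (auto simp: pscale_def L intro!: pairing_nondeg, simp_all add: DS algebra_simps)
  have nij: "ds (NB p) (NB q) + NB (NB (ds p q)) = NB (ds (NB p) q) + NB (ds p (NB q))" for p q
  proof -
    obtain x a y b where pq: "p = (x,a)" "q = (y,b)" by (cases p, cases q) auto
    show ?thesis unfolding pq prod_eq_iff
    proof
      show "fst (ds (NB (x, a)) (NB (y, b)) + NB (NB (ds (x, a) (y, b)))) = fst (NB (ds (NB (x, a)) (y, b)) + NB (ds (x, a) (NB (y, b))))"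
        by (simp add: dual_semidirect_def nijN)
      show "snd (ds (NB (x, a)) (NB (y, b)) + NB (NB (ds (x, a) (y, b)))) = snd (NB (ds (NB (x, a)) (y, b)) + NB (ds (x, a) (NB (y, b))))"
      proof (rule pairing_nondeg)
        fix v
        show "pairing (snd (ds (NB (x, a)) (NB (y, b)) + NB (NB (ds (x, a) (y, b))))) v = pairing (snd (NB (ds (NB (x, a)) (y, b)) + NB (ds (x, a) (NB (y, b))))) v"
          by (rule lc3[OF _ arg_cong[OF c6[of y v], of "pairing a"] arg_cong[OF c6[of x v], of "pairing b"] arg_cong[OF c5[of x v], of "pairing b", symmetric]])
            (simp add: DS algebra_simps)
      qed
    qed
  qed
  have ad1: "SA (ds (NB p) q) + ds p (SA (SA q)) - ds (NB p) (SA q) - SA (ds p (SA q)) = 0" for p q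
  proof -
    obtain x a y b where pq: "p = (x,a)" "q = (y,b)" by (cases p, cases q) auto
    show ?thesis unfolding pq prod_eq_iff
    proof
      show "fst (SA (ds (NB (x, a)) (y, b)) + ds (x, a) (SA (SA (y, b))) - ds (NB (x, a)) (SA (y, b)) - SA (ds (x, a) (SA (y, b)))) = fst 0"
        using c3[of x y] by (simp add: dual_semidirect_def L)
      show "snd (SA (ds (NB (x, a)) (y, b)) + ds (x, a) (SA (SA (y, b))) - ds (NB (x, a)) (SA (y, b)) - SA (ds (x, a) (SA (y, b)))) = snd 0"
      proof (rule pairing_nondeg)
        fix v
        show "pairing (snd (SA (ds (NB (x, a)) (y, b)) + ds (x, a) (SA (SA (y, b))) - ds (NB (x, a)) (SA (y, b)) - SA (ds (x, a) (SA (y, b))))) v = pairing (snd 0) v"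
          by (rule lc3[OF _ arg_cong[OF c8[of y v], of "pairing a"] arg_cong[OF c2[of x v], of "pairing b"] arg_cong[OF c1[of x v], of "pairing b", symmetric]])
            (simp add: DS algebra_simps)
      qed
    qed
  qed
  have ad2: "SA (ds p (NB q)) + ds (SA (SA p)) q - ds (SA p) (NB q) - SA (ds (SA p) q) = 0" for p q
  proof -
    obtain x a y b where pq: "p = (x,a)" "q = (y,b)" by (cases p, cases q) auto
    show ?thesis unfolding pq prod_eq_iff
    proof
      show "fst (SA (ds (x, a) (NB (y, b))) + ds (SA (SA (x, a))) (y, b) - ds (SA (x, a)) (NB (y, b)) - SA (ds (SA (x, a)) (y, b))) = fst 0"
        using c4[of x y] by (simp add: dual_semidirect_def L)
      show "snd (SA (ds (x, a) (NB (y, b))) + ds (SA (SA (x, a))) (y, b) - ds (SA (x, a)) (NB (y, b)) - SA (ds (SA (x, a)) (y, b))) = snd 0"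
      proof (rule pairing_nondeg)
        fix v
        show "pairing (snd (SA (ds (x, a) (NB (y, b))) + ds (SA (SA (x, a))) (y, b) - ds (SA (x, a)) (NB (y, b)) - SA (ds (SA (x, a)) (y, b)))) v = pairing (snd 0) v"
          by (rule lc3[OF _ arg_cong[OF c2[of y v], of "pairing a"] arg_cong[OF c8[of x v], of "pairing b"] arg_cong[OF c7[of x v], of "pairing b", symmetric]])
            (simp add: DS algebra_simps)
      qed
    qed
  qed
  show "nijenhuis_perm_algebra pscale ds NB \<and> admissible pscale ds NB SA"
    unfolding nijenhuis_perm_algebra_def nijenhuis_op_def admissible_def
    using ds_perm linNB linSA nij ad1 ad2 by blast
qed

end

theorem theorem2p40:
  fixes m :: "'k::field^'n::finite \<Rightarrow> 'k^'n \<Rightarrow> 'k^'n"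
    and N S :: "'k^'n \<Rightarrow> 'k^'n"
    and l r :: "'k^'n \<Rightarrow> 'k^'m::finite \<Rightarrow> 'k^'m"
    and \<alpha> \<beta> :: "'k^'m \<Rightarrow> 'k^'m"
  assumes "nijenhuis_perm_algebra vector_scalar_mult m N"
    and "perm_rep m l r"
    and "vlin S" and "vlin \<alpha>" and "vlin \<beta>"
  shows "((nijenhuis_perm_algebra pscale (semidirect m l r) (map_prod N \<alpha>) \<and>
          admissible pscale (semidirect m l r) (map_prod N \<alpha>) (map_prod S \<beta>))
     \<longleftrightarrow> (nijenhuis_perm_algebra pscale (dual_semidirect m l r) (map_prod N (dual_map \<beta>)) \<and>
          admissible pscale (dual_semidirect m l r) (map_prod N (dual_map \<beta>)) (map_prod S (dual_map \<alpha>)))) \<and>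
    ((nijenhuis_perm_algebra pscale (dual_semidirect m l r) (map_prod N (dual_map \<beta>)) \<and>
          admissible pscale (dual_semidirect m l r) (map_prod N (dual_map \<beta>)) (map_prod S (dual_map \<alpha>)))
     \<longleftrightarrow> (nijenhuis_rep m N l r \<alpha> \<and> admissible vector_scalar_mult m N S \<and> admissible_rep N l r \<beta> \<and>
          (\<forall>x u. \<beta> (l x (\<alpha> u)) + l (S (S x)) u = l (S x) (\<alpha> u) + \<beta> (l (S x) u)) \<and>
          (\<forall>x u. \<beta> (r x (\<alpha> u)) + r (S (S x)) u = r (S x) (\<alpha> u) + \<beta> (r (S x) u))))"
  proof -
  interpret NP m N S l r \<alpha> \<beta> by (rule NP.intro) (fact assms)+
  show ?thesis using sd_iff ds_iff unfolding cond3_def by blast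
qed

end
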